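(* Let $\mathcal H$ be a real Hilbert space, $t_0>0$, and let $f:\mathcal H\to\mathbb R$ be a convex $\mathcal C^2(\mathcal H)$ function which is bounded from below. Let $e:[t_0,+\infty[\to\mathcal H$ be continuously differentiable with $\int_{t_0}^{+\infty}\|e(t)\|dt<+\infty$ and $\int_{t_0}^{+\infty}\|\dot e(t)\|dt<+\infty$. Let $\alpha,\beta>0$. Let $x:[t_0,+\infty[\to\mathcal H$ be a solution trajectory of $$\ddot x(t)+\frac{\alpha}{t}\dot x(t)+\beta\frac{d}{dt}\big(\nabla f(x(t))+e(t)\big)+\nabla f(x(t))+e(t)=0,$$ and define $u(t):=x(t)+\beta\int_{t_0}^t\nabla f(x(s))ds$. Then: (i) $\sup_{t\ge t_0}\|\dot u(t)\|<+\infty$; (ii) $\int_{t_0}^{+\infty}\frac1t\|\dot x(t)\|^2dt<+\infty$, $\int_{t_0}^{+\infty}\|\nabla f(x(t))\|^2dt<+\infty$, $\int_{t_0}^{+\infty}\frac1t\|\dot u(t)\|^2dt<+\infty$; (iii) $\lim_{t\to+\infty}\|\dot u(t)\|=0$, $\lim_{t\to+\infty}\|\dot x(t)\|=0$, $\lim_{t\to+\infty}\|\nabla f(x(t))\|=0$; (iv) $\lim_{t\to+\infty}f(x(t))=\inf_{\mathcal H}f$.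
   Context: The set of minimizers of $f$ may be empty here. *)

theory Defs
  imports "HOL-Analysis.Analysis"
begin

end

theory Submission
  imports Defs
begin



lemma cvx_tangent:
  fixes f :: "'a::real_inner \<Rightarrow> real"
  assumes cv: "convex_on UNIV f" and gr: "\<And>y. (f has_derivative (\<lambda>h. gf y \<bullet> h)) (at y)"
  shows "f b \<ge> f a + gf a \<bullet> (b - a)"
proof -
  define \<phi> where "\<phi> = (\<lambda>s::real. f (a + s *\<^sub>R (b - a)))"
  have cphi: "convex_on UNIV \<phi>"
  proof (rule convex_onI)
    fix t x y :: real assume t: "0 < t" "t < 1"
    have "\<phi> ((1 - t) *\<^sub>R x + t *\<^sub>R y) = f ((1 - t) *\<^sub>R (a + x *\<^sub>R (b - a)) + t *\<^sub>R (a + y *\<^sub>R (b - a)))"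
      unfolding \<phi>_def by (simp add: algebra_simps)
    also have "\<dots> \<le> (1 - t) * f (a + x *\<^sub>R (b - a)) + t * f (a + y *\<^sub>R (b - a))"
      using t by (intro convex_onD[OF cv]) auto
    finally show "\<phi> ((1 - t) *\<^sub>R x + t *\<^sub>R y) \<le> (1 - t) * \<phi> x + t * \<phi> y" unfolding \<phi>_def .
  qed simp
  have d: "(\<phi> has_field_derivative (gf a \<bullet> (b - a))) (at 0 within UNIV)"
  proof -
    have "((\<lambda>s. a + s *\<^sub>R (b - a)) has_derivative (\<lambda>s. s *\<^sub>R (b - a))) (at 0)"
      by (auto intro!: derivative_eq_intros)
    from has_derivative_compose[OF this, of f "\<lambda>h. gf a \<bullet> h"] gr[of a]
    have "(\<phi> has_derivative (\<lambda>s. gf a \<bullet> (s *\<^sub>R (b - a)))) (at 0)"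
      unfolding \<phi>_def by (simp add: o_def)
    moreover have "(\<lambda>s. gf a \<bullet> (s *\<^sub>R (b - a))) = (*) (gf a \<bullet> (b - a))"
      by (auto simp: fun_eq_iff)
    ultimately show ?thesis unfolding has_field_derivative_def by simp
  qed
  have "\<phi> 1 - \<phi> 0 \<ge> (gf a \<bullet> (b - a)) * (1 - 0)"
    by (rule convex_on_imp_above_tangent[OF cphi]) (use d in auto)
  then show ?thesis unfolding \<phi>_def by simp
qed

lemma grad_mono:
  fixes f :: "'a::real_inner \<Rightarrow> real"
  assumes cv: "convex_on UNIV f" and gr: "\<And>y. (f has_derivative (\<lambda>h. gf y \<bullet> h)) (at y)"
  shows "(gf a - gf b) \<bullet> (a - b) \<ge> 0"
  using cvx_tangent[OF cv gr, of a b] cvx_tangent[OF cv gr, of b a]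
  by (simp add: inner_diff_left inner_diff_right inner_commute)

lemma hess_psd:
  fixes f :: "'a::real_inner \<Rightarrow> real"
  assumes cv: "convex_on UNIV f" and gr: "\<And>y. (f has_derivative (\<lambda>h. gf y \<bullet> h)) (at y)"
    and hs: "\<And>y. (gf has_derivative blinfun_apply (Hf y)) (at y)"
  shows "blinfun_apply (Hf y) v \<bullet> v \<ge> 0"
proof (rule ccontr)
  assume neg: "\<not> ?thesis"
  define \<phi> where "\<phi> = (\<lambda>s::real. gf (y + s *\<^sub>R v) \<bullet> v)"
  have d: "DERIV \<phi> 0 :> (blinfun_apply (Hf y) v \<bullet> v)"
  proof -
    have "((\<lambda>s. y + s *\<^sub>R v) has_derivative (\<lambda>s. s *\<^sub>R v)) (at 0)"
      by (auto intro!: derivative_eq_intros)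
    from has_derivative_compose[OF this, of gf "blinfun_apply (Hf y)"] hs[of y]
    have "((\<lambda>s. gf (y + s *\<^sub>R v)) has_derivative (\<lambda>s. blinfun_apply (Hf y) (s *\<^sub>R v))) (at 0)"
      by (simp add: o_def)
    then have "(\<phi> has_derivative (\<lambda>s. blinfun_apply (Hf y) (s *\<^sub>R v) \<bullet> v)) (at 0)"
      unfolding \<phi>_def by (auto intro!: derivative_eq_intros)
    moreover have "(\<lambda>s. blinfun_apply (Hf y) (s *\<^sub>R v) \<bullet> v) = (*) (blinfun_apply (Hf y) v \<bullet> v)"
      by (auto simp: fun_eq_iff blinfun.scaleR_right)
    ultimately show ?thesis unfolding has_field_derivative_def by simp
  qed
  obtain d where d0: "d > 0" and dd: "\<And>h. h > 0 \<Longrightarrow> h < d \<Longrightarrow> \<phi> 0 > \<phi> (0 + h)"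
    using DERIV_neg_dec_right[OF d] neg by force
  have "\<phi> 0 > \<phi> (d/2)" using dd[of "d/2"] d0 by simp
  moreover have "(gf (y + (d/2) *\<^sub>R v) - gf y) \<bullet> ((y + (d/2) *\<^sub>R v) - y) \<ge> 0"
    by (rule grad_mono[OF cv gr])
  then have "(d/2) * ((gf (y + (d/2) *\<^sub>R v) - gf y) \<bullet> v) \<ge> 0" by simp
  then have "(gf (y + (d/2) *\<^sub>R v) - gf y) \<bullet> v \<ge> 0" using d0
    by (simp add: zero_le_mult_iff)
  ultimately show False unfolding \<phi>_def by (simp add: inner_diff_left)
qed



lemma deriv_int_le:
  fixes \<phi> \<phi>' \<psi> :: "real \<Rightarrow> real"
  assumes ab: "a \<le> b"
    and d: "\<And>s. s \<in> {a..b} \<Longrightarrow> (\<phi> has_real_derivative \<phi>' s) (at s within {a..b})"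
    and le: "\<And>s. s \<in> {a..b} \<Longrightarrow> \<phi>' s \<le> \<psi> s"
    and int: "\<psi> integrable_on {a..b}"
  shows "\<phi> b - \<phi> a \<le> integral {a..b} \<psi>"
proof -
  have "(\<phi>' has_integral (\<phi> b - \<phi> a)) {a..b}"
    using ab d by (intro fundamental_theorem_of_calculus)
      (auto simp: has_real_derivative_iff_has_vector_derivative[symmetric])
  then show ?thesis
    using has_integral_le[OF _ integrable_integral[OF int] le] by blast
qed

lemma deriv_int_le':
  fixes \<phi> \<phi>' \<psi> :: "real \<Rightarrow> real"
  assumes ab: "a \<le> b" and sub: "{a..b} \<subseteq> S"
    and d: "\<And>s. s \<in> {a..b} \<Longrightarrow> (\<phi> has_real_derivative \<phi>' s) (at s within S)"
    and le: "\<And>s. s \<in> {a..b} \<Longrightarrow> \<phi>' s \<le> \<psi> s"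
    and int: "\<psi> integrable_on {a..b}"
  shows "\<phi> b - \<phi> a \<le> integral {a..b} \<psi>"
  using deriv_int_le[OF ab _ le int] d DERIV_subset[OF _ sub] by blast

lemma deriv_mono':
  fixes \<phi> \<phi>' :: "real \<Rightarrow> real"
  assumes ab: "a \<le> b" and sub: "{a..b} \<subseteq> S"
    and d: "\<And>s. s \<in> {a..b} \<Longrightarrow> (\<phi> has_real_derivative \<phi>' s) (at s within S)"
    and le: "\<And>s. s \<in> {a..b} \<Longrightarrow> \<phi>' s \<le> 0"
  shows "\<phi> b \<le> \<phi> a"
proof -
  have "\<phi> b - \<phi> a \<le> integral {a..b} (\<lambda>_. 0::real)" by (rule deriv_int_le') (use ab sub d le integrable_0 in auto)
  then show ?thesis by simp
qed

lemma mono_conv: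
  fixes \<phi> :: "real \<Rightarrow> real"
  assumes mono: "\<And>s t. a \<le> s \<Longrightarrow> s \<le> t \<Longrightarrow> \<phi> s \<le> \<phi> t"
    and bdd: "\<And>t. a \<le> t \<Longrightarrow> \<phi> t \<le> B"
  shows "(\<phi> \<longlongrightarrow> (SUP t\<in>{a..}. \<phi> t)) at_top"
proof (rule order_tendstoI)
  let ?L = "SUP t\<in>{a..}. \<phi> t"
  have bd: "bdd_above (\<phi> ` {a..})" using bdd by (auto intro!: bdd_aboveI)
  fix y assume "y < ?L"
  then obtain t where t: "t \<in> {a..}" "y < \<phi> t"
    using less_cSUP_iff[OF _ bd] by auto
  show "eventually (\<lambda>s. y < \<phi> s) at_top"
    unfolding eventually_at_top_linorder
    using t mono by (intro exI[of _ t]) (auto intro: less_le_trans)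
next
  let ?L = "SUP t\<in>{a..}. \<phi> t"
  have bd: "bdd_above (\<phi> ` {a..})" using bdd by (auto intro!: bdd_aboveI)
  fix y assume y: "?L < y"
  show "eventually (\<lambda>s. \<phi> s < y) at_top"
    unfolding eventually_at_top_linorder
    using y cSUP_upper[OF _ bd] by (intro exI[of _ a]) (auto intro: le_less_trans)
qed

lemma mono_conv_ex:
  fixes \<phi> :: "real \<Rightarrow> real"
  assumes "\<And>s t. a \<le> s \<Longrightarrow> s \<le> t \<Longrightarrow> \<phi> s \<le> \<phi> t"
    and "\<And>t. a \<le> t \<Longrightarrow> \<phi> t \<le> B"
  shows "\<exists>L. (\<phi> \<longlongrightarrow> L) at_top \<and> (\<forall>t\<ge>a. \<phi> t \<le> L)"
proof -
  have bd: "bdd_above (\<phi> ` {a..})" using assms(2) by (auto intro!: bdd_aboveI)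
  have "(\<phi> \<longlongrightarrow> (SUP t\<in>{a..}. \<phi> t)) at_top" by (rule mono_conv[of a \<phi> B]) (use assms in auto)
  then show ?thesis using cSUP_upper[OF _ bd] by auto
qed

lemma antimono_conv_ex:
  fixes \<phi> :: "real \<Rightarrow> real"
  assumes "\<And>s t. a \<le> s \<Longrightarrow> s \<le> t \<Longrightarrow> \<phi> t \<le> \<phi> s"
    and "\<And>t. a \<le> t \<Longrightarrow> B \<le> \<phi> t"
  shows "\<exists>L. (\<phi> \<longlongrightarrow> L) at_top"
proof -
  obtain L where "((\<lambda>t. - \<phi> t) \<longlongrightarrow> L) at_top"
    using mono_conv_ex[of a "\<lambda>t. - \<phi> t" "-B"] assms by force
  then have "((\<lambda>t. - (- \<phi> t)) \<longlongrightarrow> - L) at_top" by (intro tendsto_minus)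
  then show ?thesis by auto
qed

lemma integrable_nonneg_bdd:
  fixes h :: "real \<Rightarrow> real"
  assumes cont: "continuous_on {a..} h" and nn: "\<And>t. t \<ge> a \<Longrightarrow> h t \<ge> 0"
    and bd: "\<And>t. t \<ge> a \<Longrightarrow> integral {a..t} h \<le> B"
  shows "h integrable_on {a..}"
proof -
  have int: "h integrable_on {a..y}" for y
    by (rule integrable_continuous_interval) (rule continuous_on_subset[OF cont], auto)
  have "\<exists>L. ((\<lambda>y. integral {a..y} h) \<longlongrightarrow> L) at_top \<and> (\<forall>t\<ge>a. integral {a..t} h \<le> L)"
  proof (rule mono_conv_ex[of a _ B])
    fix s t assume "a \<le> s" "s \<le> t"
    then show "integral {a..s} h \<le> integral {a..t} h"
      by (intro integral_subset_le int) (auto intro: nn)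
  qed (use bd in auto)
  then obtain L where "((\<lambda>y. integral {a..y} h) \<longlongrightarrow> L) at_top" by blast
  from has_integral_to_inf[OF int this nn] show ?thesis by blast
qed

lemma integral_tail_small:
  fixes h :: "real \<Rightarrow> real"
  assumes cont: "continuous_on {a..} h" and nn: "\<And>t. t \<ge> a \<Longrightarrow> h t \<ge> 0"
    and hi: "h integrable_on {a..}" and eta: "\<eta> > 0"
  shows "\<exists>T\<ge>a. \<forall>t\<ge>T. integral {T..t} h \<le> \<eta>"
proof -
  have int: "h integrable_on {a..y}" for y
    by (rule integrable_continuous_interval) (rule continuous_on_subset[OF cont], auto)
  have "\<exists>L. ((\<lambda>y. integral {a..y} h) \<longlongrightarrow> L) at_top \<and> (\<forall>t\<ge>a. integral {a..t} h \<le> L)"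
  proof (rule mono_conv_ex[of a _ "integral {a..} h"])
    fix s t assume "a \<le> s" "s \<le> t"
    then show "integral {a..s} h \<le> integral {a..t} h"
      by (intro integral_subset_le int) (auto intro: nn)
  next
    fix t assume "a \<le> t"
    then show "integral {a..t} h \<le> integral {a..} h"
      by (intro integral_subset_le int hi) (auto intro: nn)
  qed
  then obtain L where L: "((\<lambda>y. integral {a..y} h) \<longlongrightarrow> L) at_top" "\<forall>t\<ge>a. integral {a..t} h \<le> L"
    by blast
  from order_tendstoD(1)[OF L(1), of "L - \<eta>"] eta
  obtain T0 where T0: "\<And>t. t \<ge> T0 \<Longrightarrow> L - \<eta> < integral {a..t} h"
    unfolding eventually_at_top_linorder by auto
  define T where "T = max a T0"
  have "integral {T..t} h \<le> \<eta>" if "t \<ge> T" for t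
  proof -
    have "integral {a..T} h + integral {T..t} h = integral {a..t} h"
      by (rule Henstock_Kurzweil_Integration.integral_combine[OF _ _ int]) (use that in \<open>auto simp: T_def\<close>)
    moreover have "L - \<eta> < integral {a..T} h" using T0[of T] by (simp add: T_def)
    moreover have "integral {a..t} h \<le> L" using L(2) that by (simp add: T_def)
    ultimately show ?thesis by linarith
  qed
  then show ?thesis by (auto simp: T_def intro!: exI[of _ "max a T0"])
qed

lemma gronwall_bdd:
  fixes \<phi> \<phi>' k :: "real \<Rightarrow> real"
  assumes d: "\<And>s. s \<ge> a \<Longrightarrow> (\<phi> has_real_derivative \<phi>' s) (at s within {a..})"
    and le: "\<And>s. s \<ge> a \<Longrightarrow> \<phi>' s \<le> k s * (1 + \<phi> s)"
    and kc: "continuous_on {a..} k" and kn: "\<And>s. s \<ge> a \<Longrightarrow> k s \<ge> 0"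
    and kb: "\<And>t. t \<ge> a \<Longrightarrow> integral {a..t} k \<le> Kb"
  shows "\<exists>B. \<forall>t\<ge>a. \<phi> t \<le> B"
proof -
  define K where "K = (\<lambda>t. integral {a..t} k)"
  have int: "k integrable_on {a..y}" for y
    by (rule integrable_continuous_interval) (rule continuous_on_subset[OF kc], auto)
  have KB: "K t \<le> Kb" if "t \<ge> a" for t
    unfolding K_def using that by (rule kb)
  have "\<phi> t \<le> \<bar>1 + \<phi> a\<bar> * exp Kb" if t: "t \<ge> a" for t
  proof -
    define \<Phi> where "\<Phi> = (\<lambda>s. (1 + \<phi> s) * exp (- K s))"
    have "\<Phi> t \<le> \<Phi> a"
    proof (rule deriv_mono'[OF t order.refl])
      fix s assume s: "s \<in> {a..t}"
      have dK: "(K has_real_derivative k s) (at s within {a..t})"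
        unfolding K_def by (rule integral_has_real_derivative[OF continuous_on_subset[OF kc] s]) auto
      have dp: "(\<phi> has_real_derivative \<phi>' s) (at s within {a..t})"
        using DERIV_subset[OF d[of s]] s by auto
      show "(\<Phi> has_real_derivative (\<phi>' s * exp (- K s) - (1 + \<phi> s) * k s * exp (- K s))) (at s within {a..t})"
        unfolding \<Phi>_def using dK dp
        by (auto intro!: derivative_eq_intros simp: algebra_simps)
      have "\<phi>' s - (1 + \<phi> s) * k s \<le> 0" using le[of s] s by (auto simp: algebra_simps)
      moreover have "\<phi>' s * exp (- K s) - (1 + \<phi> s) * k s * exp (- K s) = (\<phi>' s - (1 + \<phi> s) * k s) * exp (- K s)"
        by (simp add: algebra_simps)
      ultimately show "\<phi>' s * exp (- K s) - (1 + \<phi> s) * k s * exp (- K s) \<le> 0"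
        by (simp add: mult_nonpos_nonneg)
    qed
    moreover have "K a = 0" by (simp add: K_def)
    ultimately have "(1 + \<phi> t) * exp (- K t) \<le> 1 + \<phi> a" by (simp add: \<Phi>_def)
    then have "1 + \<phi> t \<le> (1 + \<phi> a) * exp (K t)"
      by (simp add: exp_minus field_simps)
    also have "\<dots> \<le> \<bar>1 + \<phi> a\<bar> * exp (K t)" by (intro mult_right_mono) auto
    also have "\<dots> \<le> \<bar>1 + \<phi> a\<bar> * exp Kb"
      using KB[OF t] by (intro mult_left_mono) auto
    finally show ?thesis by linarith
  qed
  then show ?thesis by blast
qed

lemma conv_by_deriv:
  fixes \<phi> \<phi>' k :: "real \<Rightarrow> real"
  assumes d: "\<And>s. s \<ge> a \<Longrightarrow> (\<phi> has_real_derivative \<phi>' s) (at s within {a..})"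
    and le: "\<And>s. s \<ge> a \<Longrightarrow> \<phi>' s \<le> k s"
    and kc: "continuous_on {a..} k" and kn: "\<And>s. s \<ge> a \<Longrightarrow> k s \<ge> 0"
    and kb: "\<And>t. t \<ge> a \<Longrightarrow> integral {a..t} k \<le> Kb"
    and lb: "\<And>t. t \<ge> a \<Longrightarrow> B \<le> \<phi> t"
  shows "\<exists>L. (\<phi> \<longlongrightarrow> L) at_top"
proof -
  define K where "K = (\<lambda>t. integral {a..t} k)"
  have int: "k integrable_on {c..y}" if "c \<ge> a" for c y
    by (rule integrable_continuous_interval) (rule continuous_on_subset[OF kc], use that in auto)
  have Kn: "K t \<ge> 0" if "t \<ge> a" for t
    unfolding K_def by (rule integral_nonneg[OF int]) (use kn in auto)
  have "\<exists>L. ((\<lambda>t. \<phi> t - K t) \<longlongrightarrow> L) at_top"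
  proof (rule antimono_conv_ex[of a _ "B - Kb"])
    fix s t assume st: "a \<le> s" "s \<le> t"
    have "\<phi> t - \<phi> s \<le> integral {s..t} k"
      by (rule deriv_int_le'[OF st(2) _ d le int]) (use st in auto)
    moreover have "K s + integral {s..t} k = K t"
      unfolding K_def by (rule Henstock_Kurzweil_Integration.integral_combine[OF st int]) simp
    ultimately show "\<phi> t - K t \<le> \<phi> s - K s" by linarith
  next
    fix t assume "a \<le> t"
    then show "B - Kb \<le> \<phi> t - K t" using lb[of t] kb[of t] by (simp add: K_def)
  qed
  then obtain L1 where L1: "((\<lambda>t. \<phi> t - K t) \<longlongrightarrow> L1) at_top" by blast
  have "\<exists>L. (K \<longlongrightarrow> L) at_top \<and> (\<forall>t\<ge>a. K t \<le> L)"
  proof (rule mono_conv_ex[of a _ Kb])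
    fix s t assume st: "a \<le> s" "s \<le> t"
    then show "K s \<le> K t" unfolding K_def
      by (intro integral_subset_le int) (auto intro: kn)
  qed (use kb in \<open>auto simp: K_def\<close>)
  then obtain L2 where L2: "(K \<longlongrightarrow> L2) at_top" by blast
  have "((\<lambda>t. (\<phi> t - K t) + K t) \<longlongrightarrow> L1 + L2) at_top" by (intro tendsto_add L1 L2)
  then show ?thesis by auto
qed

lemma int_bound_by_deriv:
  fixes \<phi> \<phi>' k w :: "real \<Rightarrow> real"
  assumes ab: "a \<le> b" and sub: "{a..b} \<subseteq> S"
    and d: "\<And>s. s \<in> {a..b} \<Longrightarrow> (\<phi> has_real_derivative \<phi>' s) (at s within S)"
    and le: "\<And>s. s \<in> {a..b} \<Longrightarrow> \<phi>' s \<le> k s - w s"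
    and ki: "k integrable_on {a..b}" and wi: "w integrable_on {a..b}"
  shows "integral {a..b} w \<le> \<phi> a - \<phi> b + integral {a..b} k"
proof -
  have "\<phi> b - \<phi> a \<le> integral {a..b} (\<lambda>s. k s - w s)"
    by (rule deriv_int_le'[OF ab sub d le integrable_diff[OF ki wi]])
  also have "\<dots> = integral {a..b} k - integral {a..b} w"
    by (rule Henstock_Kurzweil_Integration.integral_diff[OF ki wi])
  finally show ?thesis by linarith
qed

lemma inner_deriv:
  assumes "(a has_vector_derivative a') (at t within S)" "(b has_vector_derivative b') (at t within S)"
  shows "((\<lambda>s. a s \<bullet> b s) has_real_derivative (a t \<bullet> b' + a' \<bullet> b t)) (at t within S)"
  using bounded_bilinear.has_vector_derivative[OF bounded_bilinear_inner assms]
  by (simp add: has_real_derivative_iff_has_vector_derivative)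

lemma hvd_scale:
  "(g has_vector_derivative g') F \<Longrightarrow> ((\<lambda>x. c *\<^sub>R g x) has_vector_derivative c *\<^sub>R g') F"
  by (rule bounded_linear.has_vector_derivative[OF bounded_linear_scaleR_right])

lemma int_split_nonneg:
  fixes h :: "real \<Rightarrow> real"
  assumes cont: "continuous_on {a..} h" and nn: "\<And>t. t \<ge> a \<Longrightarrow> h t \<ge> 0"
    and ab: "a \<le> b" and bd: "\<And>t. t \<ge> b \<Longrightarrow> integral {b..t} h \<le> B"
  shows "h integrable_on {a..}"
proof (rule integrable_nonneg_bdd[OF cont nn])
  have int: "h integrable_on {c..y}" if "c \<ge> a" for c y
    by (rule integrable_continuous_interval) (rule continuous_on_subset[OF cont], use that in auto)
  fix t assume t: "t \<ge> a"
  show "integral {a..t} h \<le> integral {a..b} h + max B 0"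
  proof (cases "t \<le> b")
    case True
    then have "integral {a..t} h \<le> integral {a..b} h"
      using t by (intro integral_subset_le int) (auto intro: nn)
    then show ?thesis by linarith
  next
    case False
    have "integral {a..b} h + integral {b..t} h = integral {a..t} h"
      using False ab by (intro Henstock_Kurzweil_Integration.integral_combine int) auto
    then show ?thesis using bd[of t] False by linarith
  qed
qed

lemma inv_weight_limit_zero:
  fixes w :: "real \<Rightarrow> real"
  assumes a: "a > 0" and cont: "continuous_on {a..} w" and nn: "\<And>t. t \<ge> a \<Longrightarrow> w t \<ge> 0"
    and int: "(\<lambda>t. (1 / t) * w t) integrable_on {a..}"
    and lim: "(w \<longlongrightarrow> L) at_top"
  shows "L = 0"
proof (rule ccontr)
  assume L0: "L \<noteq> 0"
  have "L \<ge> 0"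
    using lim nn by (intro tendsto_lowerbound[OF lim]) (auto simp: eventually_at_top_linorder)
  with L0 have Lp: "L > 0" by simp
  from order_tendstoD(1)[OF lim, of "L/2"] Lp
  obtain T0 where T0: "\<And>t. t \<ge> T0 \<Longrightarrow> L/2 < w t" unfolding eventually_at_top_linorder by auto
  define T where "T = max a T0"
  have Tp: "T > 0" "T \<ge> a" using a by (auto simp: T_def)
  have c2: "continuous_on {a..} (\<lambda>t. (1 / t) * w t)"
    using a by (intro continuous_intros cont) auto
  have ii: "(\<lambda>t. (1 / t) * w t) integrable_on {a..y}" for y
    by (rule integrable_continuous_interval) (rule continuous_on_subset[OF c2], auto)
  define I where "I = integral {a..} (\<lambda>t. (1 / t) * w t)"
  have bound: "(L/2) * (ln t - ln T) \<le> I" if t: "t \<ge> T" for t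
  proof -
    have "((\<lambda>s. 1 / s) has_integral (ln t - ln T)) {T..t}"
      using t Tp by (intro fundamental_theorem_of_calculus)
        (auto intro!: derivative_eq_intros simp flip: has_real_derivative_iff_has_vector_derivative
          simp: field_simps)
    then have "((\<lambda>s. (L/2) * (1 / s)) has_integral ((L/2) * (ln t - ln T))) {T..t}"
      by (rule has_integral_mult_right)
    moreover have "((\<lambda>s. (1 / s) * w s) has_integral integral {T..t} (\<lambda>s. (1 / s) * w s)) {T..t}"
      by (rule integrable_integral) (rule integrable_continuous_interval, rule continuous_on_subset[OF c2], use Tp in auto)
    ultimately have "(L/2) * (ln t - ln T) \<le> integral {T..t} (\<lambda>s. (1 / s) * w s)"
    proof (rule has_integral_le)
      fix s assume s: "s \<in> {T..t}"
      then have "L/2 < w s" "s > 0" using T0[of s] Tp by (auto simp: T_def)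
      then have "1/s * (L/2) \<le> 1/s * w s" by (intro mult_left_mono) auto
      then show "L / 2 * (1 / s) \<le> 1 / s * w s" by (simp add: mult.commute)
    qed
    also have "\<dots> \<le> I" unfolding I_def
    proof (rule integral_subset_le)
      show "{T..t} \<subseteq> {a..}" using Tp by auto
      show "(\<lambda>s. (1 / s) * w s) integrable_on {T..t}"
        by (rule integrable_continuous_interval, rule continuous_on_subset[OF c2]) (use Tp in auto)
      show "(\<lambda>s. (1 / s) * w s) integrable_on {a..}" by (rule int)
      show "\<forall>s\<in>{a..}. 0 \<le> (1 / s) * w s" using nn a by auto
    qed
    finally show ?thesis .
  qed
  define t where "t = T * exp (2 * (\<bar>I\<bar> + 1) / L)"
  have "t \<ge> T" unfolding t_def using Tp Lp by auto
  from bound[OF this] have "(L/2) * (ln t - ln T) \<le> I" .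
  moreover have "ln t - ln T = 2 * (\<bar>I\<bar> + 1) / L" unfolding t_def using Tp by (simp add: ln_mult)
  ultimately have "(L/2) * (2 * (\<bar>I\<bar> + 1) / L) \<le> I" by simp
  then show False using Lp by simp
qed




typedef ('a::"{real_inner,complete_space}") wr = "UNIV :: 'a set" morphisms rep abs by simp

declare abs_inverse[simplified, simp] rep_inverse[simp] rep_inject[simp]

instantiation wr :: ("{real_inner,complete_space}") real_inner
begin
definition zero_wr :: "'a wr" where "zero_wr = abs 0"
definition plus_wr :: "'a wr \<Rightarrow> 'a wr \<Rightarrow> 'a wr" where "plus_wr a b = abs (rep a + rep b)"
definition minus_wr :: "'a wr \<Rightarrow> 'a wr \<Rightarrow> 'a wr" where "minus_wr a b = abs (rep a - rep b)"
definition uminus_wr :: "'a wr \<Rightarrow> 'a wr" where "uminus_wr a = abs (- rep a)"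
definition scaleR_wr :: "real \<Rightarrow> 'a wr \<Rightarrow> 'a wr" where "scaleR_wr r a = abs (r *\<^sub>R rep a)"
definition norm_wr :: "'a wr \<Rightarrow> real" where "norm_wr a = norm (rep a)"
definition sgn_wr :: "'a wr \<Rightarrow> 'a wr" where "sgn_wr a = abs (sgn (rep a))"
definition dist_wr :: "'a wr \<Rightarrow> 'a wr \<Rightarrow> real" where "dist_wr a b = dist (rep a) (rep b)"
definition inner_wr :: "'a wr \<Rightarrow> 'a wr \<Rightarrow> real" where "inner_wr a b = inner (rep a) (rep b)"
definition uniformity_wr :: "('a wr \<times> 'a wr) filter"
  where "uniformity_wr = (INF e\<in>{0<..}. principal {(x, y). dist x y < e})"
definition open_wr :: "'a wr set \<Rightarrow> bool"
  where "open_wr U = (\<forall>x\<in>U. eventually (\<lambda>(x', y). x' = x \<longrightarrow> y \<in> U) uniformity)"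
lemma rep_ops: "rep 0 = 0" "rep (a + b) = rep a + rep b" "rep (a - b) = rep a - rep b"
  "rep (- a) = - rep a" "rep (r *\<^sub>R a) = r *\<^sub>R rep a" "norm a = norm (rep a)"
  "rep (sgn a) = sgn (rep a)" "dist a b = dist (rep a) (rep b)" "inner a b = inner (rep a) (rep b)"
  for a b :: "'a wr"
  by (simp_all add: zero_wr_def plus_wr_def minus_wr_def uminus_wr_def scaleR_wr_def norm_wr_def
      sgn_wr_def dist_wr_def inner_wr_def)
instance proof
  fix a b c :: "'a wr" and r s :: real and U :: "'a wr set"
  show "a + b + c = a + (b + c)" by (simp add: rep_ops flip: rep_inject add.assoc)
  show "a + b = b + a" by (simp add: rep_ops flip: rep_inject add.commute)
  show "0 + a = a" by (simp add: rep_ops flip: rep_inject)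
  show "- a + a = 0" by (simp add: rep_ops flip: rep_inject)
  show "a - b = a + - b" by (simp add: rep_ops flip: rep_inject)
  show "r *\<^sub>R (a + b) = r *\<^sub>R a + r *\<^sub>R b" by (simp add: rep_ops scaleR_add_right flip: rep_inject)
  show "(r + s) *\<^sub>R a = r *\<^sub>R a + s *\<^sub>R a" by (simp add: rep_ops scaleR_add_left flip: rep_inject)
  show "r *\<^sub>R s *\<^sub>R a = (r * s) *\<^sub>R a" by (simp add: rep_ops flip: rep_inject)
  show "1 *\<^sub>R a = a" by (simp add: rep_ops flip: rep_inject)
  show "dist a b = norm (a - b)" by (simp add: rep_ops dist_norm)
  show "sgn a = inverse (norm a) *\<^sub>R a" by (simp add: rep_ops sgn_div_norm flip: rep_inject)
  show "uniformity = (INF e\<in>{0<..}. principal {(x, y). dist (x::'a wr) y < e})" by (simp add: uniformity_wr_def)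
  show "open U = (\<forall>x\<in>U. \<forall>\<^sub>F (x', y) in uniformity. x' = x \<longrightarrow> y \<in> U)" by (simp add: open_wr_def)
  show "inner a b = inner b a" by (simp add: rep_ops inner_commute)
  show "inner (a + b) c = inner a c + inner b c" by (simp add: rep_ops inner_add_left)
  show "inner (r *\<^sub>R a) b = r * inner a b" by (simp add: rep_ops)
  show "0 \<le> inner a a" by (simp add: rep_ops)
  show "(inner a a = 0) = (a = 0)" by (simp add: rep_ops flip: rep_inject)
  show "norm a = sqrt (inner a a)" by (simp add: rep_ops norm_eq_sqrt_inner)
qed
end

lemma rep_ops': "rep (0::'a::{real_inner,complete_space} wr) = 0" "rep (a + b) = rep a + rep b"
  "rep (r *\<^sub>R a) = r *\<^sub>R rep a" "norm (rep a) = norm a" "dist (rep a) (rep b) = dist a b"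
  for a b :: "'a::{real_inner,complete_space} wr"
  by (simp_all add: rep_ops)

instance wr :: ("{real_inner,complete_space}") complete_space
proof
  fix X :: "nat \<Rightarrow> 'a wr" assume "Cauchy X"
  then have "Cauchy (\<lambda>n. rep (X n))" unfolding Cauchy_def by (simp add: rep_ops')
  from Cauchy_convergent[OF this] obtain l where "(\<lambda>n. rep (X n)) \<longlonglongrightarrow> l" unfolding convergent_def by blast
  then have "X \<longlonglongrightarrow> wr.abs l" unfolding lim_sequentially
    using rep_ops'(5)[of "X _" "wr.abs l"] by simp
  then show "convergent X" by (auto simp: convergent_def)
qed

instance wr :: ("{real_inner,complete_space}") banach ..

lemma bl_rep: "bounded_linear (rep :: 'a::{real_inner,complete_space} wr \<Rightarrow> 'a)"
  by (rule bounded_linear_intro[where K=1]) (auto simp: rep_ops')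

lemma dist_abs: "dist (wr.abs a) (wr.abs b) = dist a (b :: 'a::{real_inner,complete_space})"
  using rep_ops'(5)[of "wr.abs a" "wr.abs b"] by simp

lemma abs_cont:
  assumes "continuous_on S G"
  shows "continuous_on S (\<lambda>t. wr.abs (G t :: 'a::{real_inner,complete_space}))"
  using assms unfolding continuous_on_def tendsto_iff by (simp add: dist_abs)

lemma hv_integral_deriv:
  fixes G :: "real \<Rightarrow> 'a::{real_inner,complete_space}"
  assumes cont: "continuous_on {a..} G" and t: "t \<ge> a"
  shows "((\<lambda>v. integral {a..v} G) has_vector_derivative G t) (at t within {a..t+1})"
proof -
  define H where "H = (\<lambda>t. wr.abs (G t))"
  have Hc: "continuous_on {a..} H" unfolding H_def by (rule abs_cont[OF cont])
  have Hi: "H integrable_on {a..v}" for v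
    by (rule integrable_continuous_interval, rule continuous_on_subset[OF Hc]) auto
  have eq: "integral {a..v} G = rep (integral {a..v} H)" for v
  proof -
    have "integral {a..v} (rep \<circ> H) = rep (integral {a..v} H)"
      by (rule integral_linear[OF Hi bl_rep])
    moreover have "rep \<circ> H = G" by (auto simp: H_def fun_eq_iff)
    ultimately show ?thesis by simp
  qed
  have "((\<lambda>v. integral {a..v} H) has_vector_derivative H t) (at t within {a..t+1})"
    using t by (intro integral_has_vector_derivative continuous_on_subset[OF Hc]) auto
  then have "((\<lambda>v. rep (integral {a..v} H)) has_vector_derivative rep (H t)) (at t within {a..t+1})"
    using bounded_linear.has_vector_derivative[OF bl_rep] by blast
  then show ?thesis by (simp add: eq H_def)
qed




lemma integral_cmult_real: "integral S (\<lambda>x. c * f x) = c * integral S (f :: 'b::euclidean_space \<Rightarrow> real)"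
  using integral_cmul[of S c f] by simp

theorem theorem4:
  fixes f :: "'a::{real_inner,complete_space} \<Rightarrow> real"
    and gf :: "'a \<Rightarrow> 'a" and Hf :: "'a \<Rightarrow> ('a \<Rightarrow>\<^sub>L 'a)"
    and e e' x x' x'' :: "real \<Rightarrow> 'a"
    and t0 \<alpha> \<beta> :: real
  assumes t0: "t0 > 0"
    and f_grad: "\<And>y. (f has_derivative (\<lambda>h. gf y \<bullet> h)) (at y)"
    and f_hess: "\<And>y. (gf has_derivative blinfun_apply (Hf y)) (at y)"
    and f_C2: "continuous_on UNIV Hf"
    and f_convex: "convex_on UNIV f"
    and f_bdd: "bdd_below (range f)"
    and e_deriv: "\<And>t. t \<ge> t0 \<Longrightarrow> (e has_vector_derivative e' t) (at t within {t0..})"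
    and e'_cont: "continuous_on {t0..} e'"
    and e_int: "(\<lambda>t. norm (e t)) integrable_on {t0..}"
    and e'_int: "(\<lambda>t. norm (e' t)) integrable_on {t0..}"
    and \<alpha>: "\<alpha> > 0" and \<beta>: "\<beta> > 0"
    and x_deriv: "\<And>t. t \<ge> t0 \<Longrightarrow> (x has_vector_derivative x' t) (at t within {t0..})"
    and x'_deriv: "\<And>t. t \<ge> t0 \<Longrightarrow> (x' has_vector_derivative x'' t) (at t within {t0..})"
    and ode: "\<And>t. t \<ge> t0 \<Longrightarrow>
        x'' t + (\<alpha> / t) *\<^sub>R x' t
        + \<beta> *\<^sub>R vector_derivative (\<lambda>s. gf (x s) + e s) (at t within {t0..})
        + gf (x t) + e t = 0"
  defines "u \<equiv> (\<lambda>t. x t + \<beta> *\<^sub>R integral {t0..t} (\<lambda>s. gf (x s)))"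
  shows "(bdd_above ((\<lambda>t. norm (vector_derivative u (at t within {t0..}))) ` {t0..}))
     \<and> ((\<lambda>t. (1 / t) * (norm (x' t))\<^sup>2) integrable_on {t0..})
     \<and> ((\<lambda>t. (norm (gf (x t)))\<^sup>2) integrable_on {t0..})
     \<and> ((\<lambda>t. (1 / t) * (norm (vector_derivative u (at t within {t0..})))\<^sup>2) integrable_on {t0..})
     \<and> (((\<lambda>t. norm (vector_derivative u (at t within {t0..}))) \<longlongrightarrow> 0) at_top)
     \<and> (((\<lambda>t. norm (x' t)) \<longlongrightarrow> 0) at_top)
     \<and> (((\<lambda>t. norm (gf (x t))) \<longlongrightarrow> 0) at_top)
     \<and> (((\<lambda>t. f (x t)) \<longlongrightarrow> (INF y. f y)) at_top)"
proof -
  define D where "D = {t0..}"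
  define G where "G = (\<lambda>t. gf (x t))"
  define G' where "G' = (\<lambda>t. blinfun_apply (Hf (x t)) (x' t))"
  define g where "g = (\<lambda>t. e t + \<beta> *\<^sub>R e' t)"
  define U where "U = (\<lambda>t. x' t + \<beta> *\<^sub>R G t)"
  define m where "m = (INF y. f y)"
  have fm: "\<And>y. m \<le> f y" unfolding m_def using f_bdd by (simp add: cINF_lower)
  have dx: "\<And>t. t \<ge> t0 \<Longrightarrow> (x has_derivative (\<lambda>h. h *\<^sub>R x' t)) (at t within D)"
    using x_deriv unfolding D_def has_vector_derivative_def by blast
  have xcont: "continuous_on D x"
    using x_deriv unfolding D_def continuous_on_eq_continuous_within
    by (auto intro: has_vector_derivative_continuous)
  have x'cont: "continuous_on D x'"
    using x'_deriv unfolding D_def continuous_on_eq_continuous_within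
    by (auto intro: has_vector_derivative_continuous)
  have econt: "continuous_on D e"
    using e_deriv unfolding D_def continuous_on_eq_continuous_within
    by (auto intro: has_vector_derivative_continuous)
  have gcont: "continuous_on D g"
    unfolding g_def using econt e'_cont unfolding D_def by (intro continuous_intros) auto
  have dG: "(G has_vector_derivative G' t) (at t within D)" if t: "t \<ge> t0" for t
  proof -
    from has_derivative_compose[OF dx[OF t], of gf "blinfun_apply (Hf (x t))"] f_hess[of "x t"]
    have "(G has_derivative (\<lambda>h. blinfun_apply (Hf (x t)) (h *\<^sub>R x' t))) (at t within D)"
      unfolding G_def by (simp add: o_def)
    then show ?thesis unfolding has_vector_derivative_def G'_def
      by (simp add: blinfun.scaleR_right)
  qed
  have Gcont: "continuous_on D G"
    using dG unfolding D_def continuous_on_eq_continuous_within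
    by (auto intro: has_vector_derivative_continuous)
  have notbot: "at t within D \<noteq> bot" if t: "t \<ge> t0" for t
  proof -
    have "t islimpt {t0..t+1}" using t by (subst islimpt_Icc) auto
    then have "t islimpt D" unfolding D_def by (rule islimpt_subset) auto
    then show ?thesis using trivial_limit_within by blast
  qed
  have ode2: "x'' t = - ((\<alpha> / t) *\<^sub>R x' t) - \<beta> *\<^sub>R G' t - g t - G t" if t: "t \<ge> t0" for t
  proof -
    have "((\<lambda>s. gf (x s) + e s) has_vector_derivative (G' t + e' t)) (at t within D)"
      using dG[OF t] e_deriv[OF t] unfolding G_def D_def by (intro has_vector_derivative_add)
    then have "vector_derivative (\<lambda>s. gf (x s) + e s) (at t within {t0..}) = G' t + e' t"
      using vector_derivative_within[OF notbot[OF t]] unfolding D_def by blast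
    with ode[OF t] have "x'' t + (\<alpha> / t) *\<^sub>R x' t + \<beta> *\<^sub>R (G' t + e' t) + G t + e t = 0"
      unfolding G_def by simp
    then show ?thesis unfolding g_def by (simp add: algebra_simps eq_neg_iff_add_eq_0 scaleR_add_right)
  qed

  have du: "(u has_vector_derivative U t) (at t within D)" if t: "t \<ge> t0" for t
  proof -
    have "((\<lambda>v. integral {t0..v} G) has_vector_derivative G t) (at t within {t0..t+1})"
      by (rule hv_integral_deriv[OF _ t]) (use Gcont in \<open>simp add: D_def\<close>)
    moreover have "at t within {t0..t+1} = at t within D"
      by (rule at_within_nhd[where S="{t - 1 <..< t + 1}"]) (auto simp: D_def)
    ultimately have "((\<lambda>v. integral {t0..v} G) has_vector_derivative G t) (at t within D)" by simp
    then have "(u has_vector_derivative (x' t + \<beta> *\<^sub>R G t)) (at t within D)"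
      unfolding u_def G_def using x_deriv[OF t] unfolding D_def
      by (intro has_vector_derivative_add hvd_scale) auto
    then show ?thesis unfolding U_def .
  qed
  have vdu: "vector_derivative u (at t within D) = U t" if t: "t \<ge> t0" for t
    by (rule vector_derivative_within[OF notbot[OF t] du[OF t]])
  have dU: "(U has_vector_derivative (- ((\<alpha> / t) *\<^sub>R x' t) - g t - G t)) (at t within D)" if t: "t \<ge> t0" for t
  proof -
    have "(U has_vector_derivative (x'' t + \<beta> *\<^sub>R G' t)) (at t within D)"
      unfolding U_def using x'_deriv[OF t] dG[OF t] unfolding D_def
      by (intro has_vector_derivative_add hvd_scale) auto
    moreover have "x'' t + \<beta> *\<^sub>R G' t = - ((\<alpha> / t) *\<^sub>R x' t) - g t - G t"
      using ode2[OF t] by simp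
    ultimately show ?thesis by simp
  qed
  have df: "((\<lambda>s. f (x s)) has_real_derivative (G t \<bullet> x' t)) (at t within D)" if t: "t \<ge> t0" for t
  proof -
    from has_derivative_compose[OF dx[OF t], of f "\<lambda>h. gf (x t) \<bullet> h"] f_grad[of "x t"]
    have "((\<lambda>s. f (x s)) has_derivative (\<lambda>h. gf (x t) \<bullet> (h *\<^sub>R x' t))) (at t within D)"
      by (simp add: o_def)
    moreover have "(\<lambda>h. gf (x t) \<bullet> (h *\<^sub>R x' t)) = (*) (G t \<bullet> x' t)"
      by (auto simp: fun_eq_iff G_def)
    ultimately show ?thesis unfolding has_field_derivative_def by simp
  qed
  have psd: "G' t \<bullet> x' t \<ge> 0" for t
    unfolding G'_def by (rule hess_psd[OF f_convex f_grad f_hess])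
  have tangent: "f (x t) - f z \<le> G t \<bullet> (x t - z)" for t z
    using cvx_tangent[OF f_convex f_grad, of "x t" z] unfolding G_def
    by (simp add: inner_diff_right)
  define Kg where "Kg = integral {t0..} (\<lambda>t. norm (e t)) + \<beta> * integral {t0..} (\<lambda>t. norm (e' t))"
  have ngcont: "continuous_on D (\<lambda>t. norm (g t))" by (intro continuous_intros gcont)
  have ngint: "(\<lambda>t. norm (g t)) integrable_on {a..b}" if "a \<ge> t0" for a b
    by (rule integrable_continuous_interval, rule continuous_on_subset[OF ngcont]) (use that in \<open>auto simp: D_def\<close>)
  have Kg: "integral {a..b} (\<lambda>t. norm (g t)) \<le> Kg" if a: "a \<ge> t0" for a b
  proof (cases "a \<le> b")
    case False
    have "0 \<le> Kg" unfolding Kg_def using e_int e'_int \<beta>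
      by (intro add_nonneg_nonneg mult_nonneg_nonneg integral_nonneg) auto
    then show ?thesis using False by simp
  next
    case ab: True
    have ce: "continuous_on D (\<lambda>t. norm (e t))" "continuous_on D (\<lambda>t. norm (e' t))"
      using econt e'_cont by (auto intro!: continuous_intros simp: D_def)
    have ie: "(\<lambda>t. norm (e t)) integrable_on {a..b}" "(\<lambda>t. norm (e' t)) integrable_on {a..b}"
      using ce a by (auto intro!: integrable_continuous_interval elim!: continuous_on_subset simp: D_def)
    have i2: "(\<lambda>t. \<beta> * norm (e' t)) integrable_on {a..b}" using integrable_cmul[OF ie(2), of \<beta>] by simp
    have "integral {a..b} (\<lambda>t. norm (g t)) \<le> integral {a..b} (\<lambda>t. norm (e t) + \<beta> * norm (e' t))"
    proof (rule integral_le[OF ngint[OF a] integrable_add[OF ie(1) i2]])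
      fix t show "norm (g t) \<le> norm (e t) + \<beta> * norm (e' t)"
        unfolding g_def using norm_triangle_ineq[of "e t" "\<beta> *\<^sub>R e' t"] \<beta> by simp
    qed
    also have "\<dots> = integral {a..b} (\<lambda>t. norm (e t)) + \<beta> * integral {a..b} (\<lambda>t. norm (e' t))"
      by (simp only: Henstock_Kurzweil_Integration.integral_add[OF ie(1) i2] integral_cmult_real)
    also have "\<dots> \<le> Kg" unfolding Kg_def
      using ie a \<beta> e_int e'_int
      by (intro add_mono mult_left_mono integral_subset_le) auto
    finally show ?thesis .
  qed

  have Kg0: "0 \<le> Kg" using Kg[of t0 t0] ngint[of t0 t0] by simp
  have nx2: "x' t \<bullet> x' t = (norm (x' t))\<^sup>2" for t by (simp add: power2_norm_eq_inner)
  have nle: "norm v \<le> 1 + (v \<bullet> v) / 2" for v :: 'a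
  proof -
    have "0 \<le> (norm v - 1)\<^sup>2" by simp
    then show ?thesis by (simp add: power2_norm_eq_inner[symmetric] power2_eq_square algebra_simps)
  qed
  define E where "E = (\<lambda>s. (x' s \<bullet> x' s) / 2 + f (x s))"
  define E' where "E' = (\<lambda>t. x' t \<bullet> x'' t + G t \<bullet> x' t)"
  have dE: "(E has_real_derivative E' t) (at t within D)" if t: "t \<ge> t0" for t
  proof -
    have "((\<lambda>s. x' s \<bullet> x' s) has_real_derivative (x' t \<bullet> x'' t + x'' t \<bullet> x' t)) (at t within D)"
      using x'_deriv[OF t] unfolding D_def by (intro inner_deriv)
    then show ?thesis unfolding E_def E'_def using df[OF t]
      by (auto intro!: derivative_eq_intros simp: inner_commute)
  qed
  have dE_le: "E' t \<le> norm (g t) * norm (x' t) - (\<alpha> / t) * (x' t \<bullet> x' t)" if t: "t \<ge> t0" for t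
  proof -
    have "E' t = x' t \<bullet> (- ((\<alpha> / t) *\<^sub>R x' t) - \<beta> *\<^sub>R G' t - g t - G t) + G t \<bullet> x' t"
      unfolding E'_def by (simp only: ode2[OF t])
    also have "\<dots> = - (\<alpha>/t) * (x' t \<bullet> x' t) - \<beta> * (G' t \<bullet> x' t) - g t \<bullet> x' t"
      by (simp add: inner_diff_right inner_commute algebra_simps)
    finally have "E' t = - (\<alpha>/t) * (x' t \<bullet> x' t) - \<beta> * (G' t \<bullet> x' t) - g t \<bullet> x' t" .
    moreover have "\<beta> * (G' t \<bullet> x' t) \<ge> 0" using \<beta> psd[of t] by simp
    moreover have "- (g t \<bullet> x' t) \<le> norm (g t) * norm (x' t)"
      using norm_cauchy_schwarz[of "- g t" "x' t"] by simp
    ultimately show ?thesis by linarith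
  qed
  have Em: "E t - m \<ge> (x' t \<bullet> x' t) / 2" for t using fm[of "x t"] by (simp add: E_def)
  have "\<exists>B. \<forall>t\<ge>t0. E t - m \<le> B"
  proof (rule gronwall_bdd[where \<phi>'=E' and k="\<lambda>t. norm (g t)" and Kb=Kg])
    fix s assume s: "t0 \<le> s"
    show "((\<lambda>t. E t - m) has_real_derivative E' s) (at s within {t0..})"
      using dE[OF s] unfolding D_def by (auto intro!: derivative_eq_intros)
    have "(\<alpha> / s) * (x' s \<bullet> x' s) \<ge> 0" using \<alpha> s t0 by simp
    then have "E' s \<le> norm (g s) * norm (x' s)" using dE_le[OF s] by linarith
    also have "\<dots> \<le> norm (g s) * (1 + (E s - m))"
      using nle[of "x' s"] Em[of s] by (intro mult_left_mono) auto
    finally show "E' s \<le> norm (g s) * (1 + (E s - m))" .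
  next
    show "continuous_on {t0..} (\<lambda>t. norm (g t))" using ngcont by (simp add: D_def)
  next
    fix t show "integral {t0..t} (\<lambda>t. norm (g t)) \<le> Kg" by (rule Kg) simp
  qed auto
  then obtain BE where BE: "\<And>t. t \<ge> t0 \<Longrightarrow> E t - m \<le> BE" by blast
  define Bx where "Bx = 1 + BE"
  have Bx: "norm (x' t) \<le> Bx" if "t \<ge> t0" for t
    using nle[of "x' t"] Em[of t] BE[OF that] by (simp add: Bx_def)
  have Bx0: "0 \<le> Bx" using Bx[of t0] norm_ge_zero[of "x' t0"] by linarith
  have E'_le2: "E' t \<le> Bx * norm (g t) - \<alpha> * ((1 / t) * (norm (x' t))\<^sup>2)" if t: "t \<ge> t0" for t
  proof -
    have "norm (g t) * norm (x' t) \<le> Bx * norm (g t)"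
      using mult_left_mono[OF Bx[OF t], of "norm (g t)"] by (simp add: mult.commute)
    then show ?thesis using dE_le[OF t] by (simp add: nx2)
  qed
  have wxcont: "continuous_on D (\<lambda>t. (1 / t) * (norm (x' t))\<^sup>2)"
    using x'cont t0 by (auto intro!: continuous_intros simp: D_def)
  have wxint: "(\<lambda>t. (1 / t) * (norm (x' t))\<^sup>2) integrable_on {a..b}" if "a \<ge> t0" for a b
    by (rule integrable_continuous_interval, rule continuous_on_subset[OF wxcont]) (use that in \<open>auto simp: D_def\<close>)
  have wxbd: "integral {t0..t} (\<lambda>t. (1 / t) * (norm (x' t))\<^sup>2) \<le> (E t0 - m + Bx * Kg) / \<alpha>"
    if t: "t \<ge> t0" for t
  proof -
    have "integral {t0..t} (\<lambda>s. \<alpha> * ((1 / s) * (norm (x' s))\<^sup>2))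
        \<le> E t0 - E t + integral {t0..t} (\<lambda>s. Bx * norm (g s))"
    proof (rule int_bound_by_deriv[OF t order.refl])
      fix s assume s: "s \<in> {t0..t}"
      show "(E has_real_derivative E' s) (at s within {t0..t})"
        using dE[of s] s by (auto simp: D_def intro: DERIV_subset)
      show "E' s \<le> Bx * norm (g s) - \<alpha> * ((1 / s) * (norm (x' s))\<^sup>2)" using E'_le2[of s] s by auto
    next
      show "(\<lambda>s. Bx * norm (g s)) integrable_on {t0..t}" using integrable_cmul[OF ngint[of t0 t], of Bx] by simp
      show "(\<lambda>s. \<alpha> * ((1 / s) * (norm (x' s))\<^sup>2)) integrable_on {t0..t}" using integrable_cmul[OF wxint[of t0 t], of \<alpha>] by simp
    qed
    moreover have "integral {t0..t} (\<lambda>s. Bx * norm (g s)) = Bx * integral {t0..t} (\<lambda>s. norm (g s))"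
      by (rule integral_cmult_real)
    moreover have "integral {t0..t} (\<lambda>s. \<alpha> * ((1 / s) * (norm (x' s))\<^sup>2)) = \<alpha> * integral {t0..t} (\<lambda>s. (1 / s) * (norm (x' s))\<^sup>2)"
      by (rule integral_cmult_real)
    moreover have "Bx * integral {t0..t} (\<lambda>s. norm (g s)) \<le> Bx * Kg" using Kg[of t0 t] Bx0 by (intro mult_left_mono) auto
    moreover have "m \<le> E t" using fm[of "x t"] inner_ge_zero[of "x' t"] unfolding E_def by linarith
    ultimately have "\<alpha> * integral {t0..t} (\<lambda>s. (1 / s) * (norm (x' s))\<^sup>2) \<le> E t0 - m + Bx * Kg" by linarith
    then show ?thesis using \<alpha> by (simp add: field_simps)
  qed
  have wx_int: "(\<lambda>t. (1 / t) * (norm (x' t))\<^sup>2) integrable_on {t0..}"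
    by (rule integrable_nonneg_bdd[OF wxcont[unfolded D_def] _ wxbd]) (use t0 in auto)
  have "\<exists>L. (E \<longlongrightarrow> L) at_top"
  proof (rule conv_by_deriv[where \<phi>'=E' and k="\<lambda>s. Bx * norm (g s)" and Kb="Bx * Kg" and B=m and a=t0])
    fix s assume s: "t0 \<le> s"
    show "(E has_real_derivative E' s) (at s within {t0..})" using dE[OF s] by (simp add: D_def)
    have "\<alpha> * ((1 / s) * (norm (x' s))\<^sup>2) \<ge> 0" using \<alpha> s t0 by simp
    then show "E' s \<le> Bx * norm (g s)" using E'_le2[OF s] by linarith
    show "0 \<le> Bx * norm (g s)" using Bx0 by simp
    show "m \<le> E s" using fm[of "x s"] inner_ge_zero[of "x' s"] unfolding E_def by linarith
  next
    show "continuous_on {t0..} (\<lambda>s. Bx * norm (g s))" using ngcont by (auto intro!: continuous_intros simp: D_def)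
    fix t assume t: "t0 \<le> t"
    show "integral {t0..t} (\<lambda>s. Bx * norm (g s)) \<le> Bx * Kg"
      using Kg[of t0 t] Bx0 by (simp only: integral_cmult_real mult_left_mono)
  qed
  then obtain LE where LE: "(E \<longlongrightarrow> LE) at_top" by blast

  have BE0: "0 \<le> BE" using BE[of t0] Em[of t0] inner_ge_zero[of "x' t0"] by linarith
  have fBE: "f (x t) - m \<le> BE" if "t \<ge> t0" for t
    using BE[OF that] inner_ge_zero[of "x' t"] unfolding E_def by linarith
  define T1 where "T1 = t0 + 2 * (\<alpha> * \<beta>)"
  have ab0: "0 < \<alpha> * \<beta>" using \<alpha> \<beta> by simp
  have T1: "T1 \<ge> t0" "T1 > 0" using ab0 t0 unfolding T1_def by linarith+
  have ab_le: "\<alpha> * \<beta> / t \<le> 1 / 2" if "t \<ge> T1" for t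
  proof -
    have "2 * (\<alpha> * \<beta>) \<le> t" using that t0 by (simp add: T1_def)
    then show ?thesis using that T1 by (simp add: field_simps)
  qed
  have Ucont: "continuous_on D U" unfolding U_def by (intro continuous_intros x'cont Gcont)
  define F where "F = (\<lambda>s. (U s \<bullet> U s) / 2 + (1 - \<alpha> * \<beta> / s) * (f (x s) - m) + \<alpha> * \<beta> * BE / s)"
  define F' where "F' = (\<lambda>s. U s \<bullet> (- ((\<alpha> / s) *\<^sub>R x' s) - g s - G s) + (\<alpha> * \<beta> / s\<^sup>2) * (f (x s) - m)
      + (1 - \<alpha> * \<beta> / s) * (G s \<bullet> x' s) - \<alpha> * \<beta> * BE / s\<^sup>2)"
  have dF: "(F has_real_derivative F' t) (at t within D)" if t: "t \<ge> t0" for t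
  proof -
    have tp: "t \<noteq> 0" using t t0 by auto
    have "((\<lambda>s. U s \<bullet> U s) has_real_derivative (U t \<bullet> (- ((\<alpha> / t) *\<^sub>R x' t) - g t - G t)
        + (- ((\<alpha> / t) *\<^sub>R x' t) - g t - G t) \<bullet> U t)) (at t within D)"
      using dU[OF t] by (intro inner_deriv)
    then show ?thesis unfolding F_def F'_def using df[OF t] tp
      by (auto intro!: derivative_eq_intros simp: inner_commute power2_eq_square field_simps)
  qed
  have F'_le: "F' t \<le> norm (g t) * norm (U t) - \<alpha> * ((1 / t) * (norm (U t))\<^sup>2) - (\<beta> / 2) * (norm (G t))\<^sup>2"
    if t: "t \<ge> T1" for t
  proof -
    have tp: "t > 0" using t T1 by auto
    have xU: "x' t = U t - \<beta> *\<^sub>R G t" by (simp add: U_def)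
    have "F' t = - ((\<alpha> / t) * (U t \<bullet> U t)) - g t \<bullet> U t - \<beta> * (1 - \<alpha> * \<beta> / t) * (G t \<bullet> G t)
        + (\<alpha> * \<beta> / t\<^sup>2) * (f (x t) - m - BE)"
      unfolding F'_def xU
      by (simp add: inner_diff_right inner_diff_left inner_commute algebra_simps diff_divide_distrib add_divide_distrib)
    moreover have "- (g t \<bullet> U t) \<le> norm (g t) * norm (U t)"
      using norm_cauchy_schwarz[of "- g t" "U t"] by simp
    moreover have "(\<alpha> * \<beta> / t\<^sup>2) * (f (x t) - m - BE) \<le> 0"
      using fBE[of t] t T1 \<alpha> \<beta> by (intro mult_nonneg_nonpos) auto
    moreover have "\<beta> * (1 - \<alpha> * \<beta> / t) * (G t \<bullet> G t) \<ge> (\<beta> / 2) * (G t \<bullet> G t)"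
    proof -
      have h: "\<beta> * (\<alpha> * \<beta> / t) \<le> \<beta> * (1/2)" using mult_left_mono[OF ab_le[OF t], of \<beta>] \<beta> by simp
      have "\<beta> / 2 \<le> \<beta> * (1 - \<alpha> * \<beta> / t)" unfolding right_diff_distrib using h by linarith
      then show ?thesis by (intro mult_right_mono) auto
    qed
    moreover have "(\<alpha> / t) * (U t \<bullet> U t) = \<alpha> * ((1 / t) * (norm (U t))\<^sup>2)"
      by (simp add: power2_norm_eq_inner)
    moreover have "\<beta> / 2 * (G t \<bullet> G t) = \<beta> / 2 * (norm (G t))\<^sup>2" by (simp add: power2_norm_eq_inner)
    ultimately show ?thesis by linarith
  qed
  have F0: "F t \<ge> (U t \<bullet> U t) / 2" if t: "t \<ge> T1" for t
  proof -
    have "0 \<le> 1 - \<alpha> * \<beta> / t" using ab_le[OF t] by linarith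
    then have "0 \<le> (1 - \<alpha> * \<beta> / t) * (f (x t) - m)" using fm[of "x t"] by simp
    moreover have "0 \<le> \<alpha> * \<beta> * BE / t" using \<alpha> \<beta> BE0 t T1 by simp
    ultimately show ?thesis unfolding F_def by linarith
  qed
  have "\<exists>B. \<forall>t\<ge>T1. F t \<le> B"
  proof (rule gronwall_bdd[where \<phi>'=F' and k="\<lambda>t. norm (g t)" and Kb=Kg])
    fix s assume s: "T1 \<le> s"
    show "(F has_real_derivative F' s) (at s within {T1..})"
      using dF[of s] s T1 by (auto simp: D_def intro: DERIV_subset)
    have "0 \<le> \<alpha> * ((1 / s) * (norm (U s))\<^sup>2)" "0 \<le> (\<beta> / 2) * (norm (G s))\<^sup>2" using \<alpha> \<beta> s T1 by auto
    then have "F' s \<le> norm (g s) * norm (U s)" using F'_le[OF s] by linarith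
    also have "\<dots> \<le> norm (g s) * (1 + F s)"
      using nle[of "U s"] F0[OF s] by (intro mult_left_mono) auto
    finally show "F' s \<le> norm (g s) * (1 + F s)" .
  next
    show "continuous_on {T1..} (\<lambda>t. norm (g t))" using ngcont T1 by (auto simp: D_def elim!: continuous_on_subset)
  next
    fix t show "integral {T1..t} (\<lambda>t. norm (g t)) \<le> Kg" by (rule Kg) (use T1 in simp)
  qed auto
  then obtain BF where BF: "\<And>t. t \<ge> T1 \<Longrightarrow> F t \<le> BF" by blast
  obtain BU0 where BU0: "\<And>t. t \<in> {t0..T1} \<Longrightarrow> norm (U t) \<le> BU0"
  proof -
    have "compact (U ` {t0..T1})"
      by (rule compact_continuous_image[OF continuous_on_subset[OF Ucont] compact_Icc]) (auto simp: D_def)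
    then obtain B where "\<forall>y\<in>U ` {t0..T1}. norm y \<le> B" using compact_imp_bounded bounded_iff by metis
    then have "\<And>t. t \<in> {t0..T1} \<Longrightarrow> norm (U t) \<le> B" by blast
    then show ?thesis by (rule that)
  qed
  define BU where "BU = max BU0 (1 + BF)"
  have BU: "norm (U t) \<le> BU" if t: "t \<ge> t0" for t
  proof (cases "t \<le> T1")
    case True then show ?thesis using BU0[of t] t by (auto simp: BU_def)
  next
    case False
    then have "norm (U t) \<le> 1 + F t" using nle[of "U t"] F0[of t] by auto
    then show ?thesis using BF[of t] False by (auto simp: BU_def)
  qed
  have BU0': "0 \<le> BU" using BU[of t0] norm_ge_zero[of "U t0"] by linarith
  have F'_le2: "F' t \<le> BU * norm (g t) - \<alpha> * ((1 / t) * (norm (U t))\<^sup>2) - (\<beta> / 2) * (norm (G t))\<^sup>2"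
    if t: "t \<ge> T1" for t
  proof -
    have "norm (g t) * norm (U t) \<le> BU * norm (g t)"
      using mult_left_mono[OF BU[of t], of "norm (g t)"] t T1 by (simp add: mult.commute)
    then show ?thesis using F'_le[OF t] by linarith
  qed
  have wUcont: "continuous_on D (\<lambda>t. (1 / t) * (norm (U t))\<^sup>2)"
    using Ucont t0 by (auto intro!: continuous_intros simp: D_def)
  have wGcont: "continuous_on D (\<lambda>t. (norm (G t))\<^sup>2)"
    using Gcont by (auto intro!: continuous_intros)
  have wsc: "continuous_on D (\<lambda>s. \<alpha> * ((1 / s) * (norm (U s))\<^sup>2) + (\<beta> / 2) * (norm (G s))\<^sup>2)"
    "continuous_on D (\<lambda>s. \<alpha> * ((1 / s) * (norm (U s))\<^sup>2))"
    "continuous_on D (\<lambda>s. (\<beta> / 2) * (norm (G s))\<^sup>2)"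
    by (intro continuous_on_add continuous_on_mult_left wUcont wGcont)+
  have intc: "h integrable_on {a..b}" if "continuous_on D h" "a \<ge> t0" for h :: "real \<Rightarrow> real" and a b
    by (rule integrable_continuous_interval, rule continuous_on_subset[OF that(1)]) (use that in \<open>auto simp: D_def\<close>)
  have Fint: "integral {T1..t} (\<lambda>s. \<alpha> * ((1 / s) * (norm (U s))\<^sup>2) + (\<beta> / 2) * (norm (G s))\<^sup>2)
      \<le> F T1 - F t + BU * Kg" if t: "t \<ge> T1" for t
  proof -
    have "integral {T1..t} (\<lambda>s. \<alpha> * ((1 / s) * (norm (U s))\<^sup>2) + (\<beta> / 2) * (norm (G s))\<^sup>2)
      \<le> F T1 - F t + integral {T1..t} (\<lambda>s. BU * norm (g s))"
    proof (rule int_bound_by_deriv[OF t order.refl])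
      fix s assume s: "s \<in> {T1..t}"
      show "(F has_real_derivative F' s) (at s within {T1..t})"
        using dF[of s] s T1 by (auto simp: D_def intro: DERIV_subset)
      show "F' s \<le> BU * norm (g s) - (\<alpha> * ((1 / s) * (norm (U s))\<^sup>2) + (\<beta> / 2) * (norm (G s))\<^sup>2)"
        using F'_le2[of s] s by auto
    next
      show "(\<lambda>s. BU * norm (g s)) integrable_on {T1..t}"
        by (rule intc) (use ngcont T1 in \<open>auto intro!: continuous_intros\<close>)
      show "(\<lambda>s. \<alpha> * ((1 / s) * (norm (U s))\<^sup>2) + (\<beta> / 2) * (norm (G s))\<^sup>2) integrable_on {T1..t}"
        by (rule intc[OF wsc(1)]) (use T1 in auto)
    qed
    moreover have "integral {T1..t} (\<lambda>s. BU * norm (g s)) \<le> BU * Kg"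
      using Kg[of T1 t] T1 BU0' by (simp only: integral_cmult_real mult_left_mono)
    ultimately show ?thesis by linarith
  qed
  have Fint1: "integral {T1..t} (\<lambda>s. (1 / s) * (norm (U s))\<^sup>2) \<le> (F T1 + BU * Kg) / \<alpha>"
    if t: "t \<ge> T1" for t
  proof -
    have "integral {T1..t} (\<lambda>s. \<alpha> * ((1 / s) * (norm (U s))\<^sup>2))
        \<le> integral {T1..t} (\<lambda>s. \<alpha> * ((1 / s) * (norm (U s))\<^sup>2) + (\<beta> / 2) * (norm (G s))\<^sup>2)"
      using \<beta> T1 by (intro integral_le intc[OF wsc(1)] intc[OF wsc(2)]) auto
    also have "\<dots> \<le> F T1 + BU * Kg" using Fint[OF t] F0[OF t] inner_ge_zero[of "U t"] by linarith
    finally have "\<alpha> * integral {T1..t} (\<lambda>s. (1 / s) * (norm (U s))\<^sup>2) \<le> F T1 + BU * Kg"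
      by (simp only: integral_cmult_real)
    then show ?thesis using \<alpha> by (subst pos_le_divide_eq) (auto simp: mult.commute)
  qed
  have Fint2: "integral {T1..t} (\<lambda>s. (norm (G s))\<^sup>2) \<le> (F T1 + BU * Kg) / (\<beta> / 2)"
    if t: "t \<ge> T1" for t
  proof -
    have "integral {T1..t} (\<lambda>s. (\<beta> / 2) * (norm (G s))\<^sup>2)
        \<le> integral {T1..t} (\<lambda>s. \<alpha> * ((1 / s) * (norm (U s))\<^sup>2) + (\<beta> / 2) * (norm (G s))\<^sup>2)"
      using \<alpha> T1 by (intro integral_le intc[OF wsc(1)] intc[OF wsc(3)]) auto
    also have "\<dots> \<le> F T1 + BU * Kg" using Fint[OF t] F0[OF t] inner_ge_zero[of "U t"] by linarith
    finally have "(\<beta> / 2) * integral {T1..t} (\<lambda>s. (norm (G s))\<^sup>2) \<le> F T1 + BU * Kg"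
      by (simp only: integral_cmult_real)
    then show ?thesis using \<beta> by (subst pos_le_divide_eq) (auto simp: mult.commute)
  qed
  have wU_int: "(\<lambda>t. (1 / t) * (norm (U t))\<^sup>2) integrable_on {t0..}"
    by (rule int_split_nonneg[OF wUcont[unfolded D_def] _ T1(1) Fint1]) (use t0 in auto)
  have wG_int: "(\<lambda>t. (norm (G t))\<^sup>2) integrable_on {t0..}"
    by (rule int_split_nonneg[OF wGcont[unfolded D_def] _ T1(1) Fint2]) auto
  have "\<exists>L. (F \<longlongrightarrow> L) at_top"
  proof (rule conv_by_deriv[where \<phi>'=F' and k="\<lambda>s. BU * norm (g s)" and Kb="BU * Kg" and B=0 and a=T1])
    fix s assume s: "T1 \<le> s"
    show "(F has_real_derivative F' s) (at s within {T1..})"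
      using dF[of s] s T1 by (auto simp: D_def intro: DERIV_subset)
    have "0 \<le> \<alpha> * ((1 / s) * (norm (U s))\<^sup>2)" "0 \<le> (\<beta> / 2) * (norm (G s))\<^sup>2" using \<alpha> \<beta> s T1 by auto
    then show "F' s \<le> BU * norm (g s)" using F'_le2[OF s] by linarith
    show "0 \<le> BU * norm (g s)" using BU0' by simp
    show "0 \<le> F s" using F0[OF s] inner_ge_zero[of "U s"] by linarith
  next
    show "continuous_on {T1..} (\<lambda>s. BU * norm (g s))" using ngcont T1 by (auto intro!: continuous_intros simp: D_def elim!: continuous_on_subset)
    fix t
    show "integral {T1..t} (\<lambda>s. BU * norm (g s)) \<le> BU * Kg"
      using Kg[of T1 t] T1 BU0' by (simp only: integral_cmult_real mult_left_mono)
  qed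
  then obtain LF where LF: "(F \<longlongrightarrow> LF) at_top" by blast

  have Etend: "LE \<le> f z" for z
  proof (rule ccontr)
    assume "\<not> LE \<le> f z"
    define \<delta> where "\<delta> = (LE - f z) / 2"
    have \<delta>: "\<delta> > 0" using \<open>\<not> LE \<le> f z\<close> by (simp add: \<delta>_def)
    from order_tendstoD(1)[OF LE, of "LE - \<delta>/2"] \<delta>
    obtain TE where TE: "\<And>s. s \<ge> TE \<Longrightarrow> LE - \<delta>/2 < E s" unfolding eventually_at_top_linorder by auto
    define W where "W = BU + Kg + 1"
    have W: "W \<ge> 1" "BU + Kg \<le> W" using BU0' Kg0 by (auto simp: W_def)
    define \<epsilon> where "\<epsilon> = \<delta> / (4 * W)"
    have \<epsilon>: "\<epsilon> > 0" "W * \<epsilon> = \<delta> / 4" using \<delta> W by (auto simp: \<epsilon>_def)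
    define \<eta> where "\<eta> = min (\<delta> / 16) (\<delta>\<^sup>2 / (8 * W\<^sup>2))"
    have \<eta>: "\<eta> > 0" "\<eta> \<le> \<delta> / 16" "\<eta> \<le> \<delta>\<^sup>2 / (8 * W\<^sup>2)" using \<delta> W by (auto simp: \<eta>_def)
    have wxc': "continuous_on {t0..} (\<lambda>t. (1 / t) * (norm (x' t))\<^sup>2)" using wxcont by (simp add: D_def)
    obtain T\<eta> where T\<eta>: "T\<eta> \<ge> t0" "\<And>t. t \<ge> T\<eta> \<Longrightarrow> integral {T\<eta>..t} (\<lambda>t. (1 / t) * (norm (x' t))\<^sup>2) \<le> \<eta>"
      using integral_tail_small[OF wxc' _ wx_int \<eta>(1)] t0 by fastforce
    define T where "T = max T\<eta> (max TE T1)"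
    have T: "T \<ge> t0" "T \<ge> TE" "T > 0" "T \<ge> T\<eta>" using T\<eta> T1 by (auto simp: T_def)
    have tail: "integral {T..t} (\<lambda>t. (1 / t) * (norm (x' t))\<^sup>2) \<le> \<eta>" if t: "t \<ge> T" for t
    proof -
      have "integral {T..t} (\<lambda>t. (1 / t) * (norm (x' t))\<^sup>2) \<le> integral {T\<eta>..t} (\<lambda>t. (1 / t) * (norm (x' t))\<^sup>2)"
        using T T\<eta> t0 by (intro integral_subset_le wxint) auto
      then show ?thesis using T\<eta>(2)[of t] t T by linarith
    qed
    have sq_int: "integral {T..t} (\<lambda>s. (norm (x' s))\<^sup>2) \<le> t * \<eta>" if t: "t \<ge> T" for t
    proof -
      have "integral {T..t} (\<lambda>s. (norm (x' s))\<^sup>2) \<le> integral {T..t} (\<lambda>s. t * ((1 / s) * (norm (x' s))\<^sup>2))"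
      proof (rule integral_le)
        show "(\<lambda>s. (norm (x' s))\<^sup>2) integrable_on {T..t}"
          by (rule intc) (use x'cont T in \<open>auto intro!: continuous_intros\<close>)
        show "(\<lambda>s. t * ((1 / s) * (norm (x' s))\<^sup>2)) integrable_on {T..t}"
          using integrable_cmul[OF wxint[of T t], of t] T by simp
        fix s assume s: "s \<in> {T..t}"
        then have sp: "s > 0" "s \<le> t" using T by auto
        have "1 \<le> t / s" using sp by simp
        then have "1 * (norm (x' s))\<^sup>2 \<le> (t / s) * (norm (x' s))\<^sup>2" by (intro mult_right_mono) auto
        then show "(norm (x' s))\<^sup>2 \<le> t * ((1 / s) * (norm (x' s))\<^sup>2)" by simp
      qed
      also have "\<dots> = t * integral {T..t} (\<lambda>s. (1 / s) * (norm (x' s))\<^sup>2)" by (rule integral_cmult_real)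
      also have "\<dots> \<le> t * \<eta>" using tail[OF t] t T by (intro mult_left_mono) auto
      finally show ?thesis .
    qed

    define p where "p = (\<lambda>r. x r - z)"
    have dp: "(p has_vector_derivative x' r) (at r within D)" if r: "r \<ge> t0" for r
      unfolding p_def using x_deriv[OF r] by (auto intro!: derivative_eq_intros simp: D_def)
    have pcont: "continuous_on D p" unfolding p_def by (intro continuous_intros xcont)
    define Dt where "Dt = (\<lambda>t. norm (p T) + 1 + \<epsilon> * (t - T) + t * \<eta> / (4 * \<epsilon>))"
    have dist_bd: "norm (p s) \<le> Dt t" if st: "T \<le> s" "s \<le> t" for s t
    proof -
      define \<phi> where "\<phi> = (\<lambda>r. sqrt (p r \<bullet> p r + 1))"
      have \<phi>pos: "\<phi> r > 0" for r unfolding \<phi>_def by (simp add: add_nonneg_pos)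
      have d\<phi>: "(\<phi> has_real_derivative ((p r \<bullet> x' r) / \<phi> r)) (at r within D)" if r: "r \<ge> t0" for r
      proof -
        have "((\<lambda>r. p r \<bullet> p r) has_real_derivative (p r \<bullet> x' r + x' r \<bullet> p r)) (at r within D)"
          by (rule inner_deriv[OF dp[OF r] dp[OF r]])
        moreover have "p r \<bullet> p r + 1 > 0" by (simp add: add_nonneg_pos)
        ultimately show ?thesis unfolding \<phi>_def
          by (auto intro!: derivative_eq_intros simp: inner_commute field_simps)
      qed
      have le1: "(p r \<bullet> x' r) / \<phi> r \<le> \<epsilon> + (1 / (4 * \<epsilon>)) * (norm (x' r))\<^sup>2" for r
      proof -
        have "norm (p r) \<le> \<phi> r" unfolding \<phi>_def by (simp add: norm_eq_sqrt_inner)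
        have "(p r \<bullet> x' r) \<le> norm (p r) * norm (x' r)" by (rule norm_cauchy_schwarz)
        also have "\<dots> \<le> \<phi> r * norm (x' r)" using \<open>norm (p r) \<le> \<phi> r\<close> by (intro mult_right_mono) auto
        finally have "(p r \<bullet> x' r) / \<phi> r \<le> norm (x' r)" using \<phi>pos[of r] by (simp add: divide_le_eq mult.commute)
        moreover have "norm (x' r) \<le> \<epsilon> + (1 / (4 * \<epsilon>)) * (norm (x' r))\<^sup>2"
        proof -
          have "0 \<le> (norm (x' r) - 2 * \<epsilon>)\<^sup>2" by simp
          then have "4 * \<epsilon> * norm (x' r) \<le> 4 * \<epsilon> * \<epsilon> + (norm (x' r))\<^sup>2"
            by (simp add: power2_eq_square algebra_simps)
          then show ?thesis using \<epsilon>(1) by (simp add: field_simps power2_eq_square)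
        qed
        ultimately show ?thesis by linarith
      qed
      have xsq_int: "(\<lambda>r. (norm (x' r))\<^sup>2) integrable_on {T..s}"
        by (rule intc) (use x'cont T in \<open>auto intro!: continuous_intros\<close>)
      have "\<phi> s - \<phi> T \<le> integral {T..s} (\<lambda>r. \<epsilon> + (1 / (4 * \<epsilon>)) * (norm (x' r))\<^sup>2)"
      proof (rule deriv_int_le'[OF st(1), of D])
        show "{T..s} \<subseteq> D" using T by (auto simp: D_def)
        fix r assume "r \<in> {T..s}"
        then show "(\<phi> has_real_derivative (p r \<bullet> x' r) / \<phi> r) (at r within D)" using d\<phi>[of r] T by auto
        show "(p r \<bullet> x' r) / \<phi> r \<le> \<epsilon> + (1 / (4 * \<epsilon>)) * (norm (x' r))\<^sup>2" by (rule le1)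
      next
        show "(\<lambda>r. \<epsilon> + (1 / (4 * \<epsilon>)) * (norm (x' r))\<^sup>2) integrable_on {T..s}"
          using integrable_add[OF integrable_const_ivl integrable_cmul[OF xsq_int, of "1 / (4 * \<epsilon>)"]]
          by (simp only: real_scaleR_def)
      qed
      also have "\<dots> = \<epsilon> * (s - T) + integral {T..s} (\<lambda>r. (norm (x' r))\<^sup>2) / (4 * \<epsilon>)"
      proof -
        have "integral {T..s} (\<lambda>r. \<epsilon> + (1 / (4 * \<epsilon>)) * (norm (x' r))\<^sup>2)
            = integral {T..s} (\<lambda>r. \<epsilon>) + integral {T..s} (\<lambda>r. (1 / (4 * \<epsilon>)) * (norm (x' r))\<^sup>2)"
          using Henstock_Kurzweil_Integration.integral_add[OF integrable_const_ivl integrable_cmul[OF xsq_int, of "1 / (4 * \<epsilon>)"]]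
          by (simp only: real_scaleR_def)
        then show ?thesis using st(1) by (simp only: integral_cmult_real integral_const_real content_real) simp
      qed
      also have "\<dots> \<le> \<epsilon> * (s - T) + s * \<eta> / (4 * \<epsilon>)"
        using sq_int[of s] st \<epsilon>(1) by (simp add: divide_right_mono)
      finally have A: "\<phi> s \<le> \<phi> T + \<epsilon> * (s - T) + s * \<eta> / (4 * \<epsilon>)" by linarith
      have B: "\<phi> T \<le> norm (p T) + 1"
      proof -
        have "p T \<bullet> p T + 1 \<le> (norm (p T) + 1)\<^sup>2"
          by (simp add: power2_eq_square algebra_simps power2_norm_eq_inner[symmetric])
        then have "\<phi> T \<le> sqrt ((norm (p T) + 1)\<^sup>2)" unfolding \<phi>_def by (rule real_sqrt_le_mono)
        then show ?thesis by simp
      qed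
      have C: "norm (p s) \<le> \<phi> s" unfolding \<phi>_def by (simp add: norm_eq_sqrt_inner)
      have "\<epsilon> * (s - T) \<le> \<epsilon> * (t - T)" using st \<epsilon>(1) by (intro mult_left_mono) auto
      moreover have "s * \<eta> / (4 * \<epsilon>) \<le> t * \<eta> / (4 * \<epsilon>)"
        using st \<epsilon>(1) \<eta>(1) by (intro divide_right_mono mult_right_mono) auto
      ultimately show ?thesis using A B C unfolding Dt_def by linarith
    qed

    define Y where "Y = (\<lambda>r. U r \<bullet> p r + (\<alpha> / 2) * ((p r \<bullet> p r) / r))"
    define Yd where "Yd = (\<lambda>r. U r \<bullet> x' r - g r \<bullet> p r - G r \<bullet> p r - (\<alpha> / 2) * ((p r \<bullet> p r) / r\<^sup>2))"
    have dY: "(Y has_real_derivative Yd r) (at r within D)" if r: "r \<ge> t0" for r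
    proof -
      have rp: "r \<noteq> 0" using r t0 by auto
      have 1: "((\<lambda>r. U r \<bullet> p r) has_real_derivative (U r \<bullet> x' r + (- ((\<alpha> / r) *\<^sub>R x' r) - g r - G r) \<bullet> p r)) (at r within D)"
        by (rule inner_deriv[OF dU[OF r] dp[OF r]])
      have 2: "((\<lambda>r. p r \<bullet> p r) has_real_derivative (p r \<bullet> x' r + x' r \<bullet> p r)) (at r within D)"
        by (rule inner_deriv[OF dp[OF r] dp[OF r]])
      show ?thesis unfolding Y_def Yd_def using 1 2 rp
        by (auto intro!: derivative_eq_intros simp: inner_diff_left inner_diff_right inner_add_left inner_add_right inner_commute power2_eq_square field_simps)
    qed
    define c0 where "c0 = LE - \<delta> / 2 - f z"
    have c0: "c0 = 3 * \<delta> / 2" unfolding c0_def \<delta>_def by (simp add: field_simps)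
    define IG where "IG = integral {t0..} (\<lambda>t. (norm (G t))\<^sup>2)"
    have Yd_le: "Yd r + c0 \<le> 2 * (norm (x' r))\<^sup>2 + (\<beta>\<^sup>2 / 2) * (norm (G r))\<^sup>2 + Dt t * norm (g r)"
      if r: "T \<le> r" "r \<le> t" for r t
    proof -
      have a: "- (g r \<bullet> p r) \<le> norm (g r) * norm (p r)" using norm_cauchy_schwarz[of "- g r" "p r"] by simp
      have a2: "norm (g r) * norm (p r) \<le> Dt t * norm (g r)"
        using mult_left_mono[OF dist_bd[OF r], of "norm (g r)"] by (simp add: mult.commute)
      have b: "f (x r) - f z \<le> G r \<bullet> p r" unfolding p_def by (rule tangent)
      have c: "0 \<le> (\<alpha> / 2) * ((p r \<bullet> p r) / r\<^sup>2)" using \<alpha> by simp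
      have d: "U r \<bullet> x' r \<le> 3 / 2 * (norm (x' r))\<^sup>2 + (\<beta>\<^sup>2 / 2) * (norm (G r))\<^sup>2"
      proof -
        have "U r \<bullet> x' r = (norm (x' r))\<^sup>2 + \<beta> * (G r \<bullet> x' r)"
          by (simp add: U_def inner_add_left power2_norm_eq_inner)
        moreover have "\<beta> * (G r \<bullet> x' r) \<le> \<beta> * (norm (G r) * norm (x' r))"
          using \<beta> norm_cauchy_schwarz[of "G r" "x' r"] by (intro mult_left_mono) auto
        moreover have "\<beta> * (norm (G r) * norm (x' r)) \<le> (\<beta>\<^sup>2 / 2) * (norm (G r))\<^sup>2 + (norm (x' r))\<^sup>2 / 2"
        proof -
          have "0 \<le> (\<beta> * norm (G r) - norm (x' r))\<^sup>2" by simp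
          then show ?thesis by (simp add: power2_eq_square algebra_simps)
        qed
        ultimately show ?thesis by linarith
      qed
      have e: "LE - \<delta> / 2 < (norm (x' r))\<^sup>2 / 2 + f (x r)"
        using TE[of r] r T unfolding E_def by (simp add: power2_norm_eq_inner)
      show ?thesis unfolding Yd_def c0_def using a a2 b c d e by linarith
    qed
    have main: "c0 * (t - T) \<le> Y T + BU * Dt t + 2 * (t * \<eta>) + (\<beta>\<^sup>2 / 2) * IG + Dt t * Kg"
      if t: "t \<ge> T" for t
    proof -
      have i1: "(\<lambda>r. (norm (x' r))\<^sup>2) integrable_on {T..t}"
        by (rule intc) (use x'cont T in \<open>auto intro!: continuous_intros\<close>)
      have i2: "(\<lambda>r. (norm (G r))\<^sup>2) integrable_on {T..t}"
        by (rule intc[OF wGcont]) (use T in auto)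
      have i3: "(\<lambda>r. norm (g r)) integrable_on {T..t}" by (rule ngint) (use T in auto)
      have "(Y t + c0 * t) - (Y T + c0 * T) \<le> integral {T..t} (\<lambda>r. 2 * (norm (x' r))\<^sup>2 + (\<beta>\<^sup>2 / 2) * (norm (G r))\<^sup>2 + Dt t * norm (g r))"
      proof (rule deriv_int_le'[OF t, of D])
        show "{T..t} \<subseteq> D" using T by (auto simp: D_def)
        fix r assume r: "r \<in> {T..t}"
        show "((\<lambda>r. Y r + c0 * r) has_real_derivative (Yd r + c0)) (at r within D)"
          using dY[of r] r T by (auto intro!: derivative_eq_intros)
        show "Yd r + c0 \<le> 2 * (norm (x' r))\<^sup>2 + (\<beta>\<^sup>2 / 2) * (norm (G r))\<^sup>2 + Dt t * norm (g r)"
          using Yd_le[of r t] r by auto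
      next
        show "(\<lambda>r. 2 * (norm (x' r))\<^sup>2 + (\<beta>\<^sup>2 / 2) * (norm (G r))\<^sup>2 + Dt t * norm (g r)) integrable_on {T..t}"
          using integrable_add[OF integrable_add[OF integrable_cmul[OF i1, of 2] integrable_cmul[OF i2, of "\<beta>\<^sup>2 / 2"]]
            integrable_cmul[OF i3, of "Dt t"]]
          by (simp only: real_scaleR_def)
      qed
      also have "\<dots> = 2 * integral {T..t} (\<lambda>r. (norm (x' r))\<^sup>2) + (\<beta>\<^sup>2 / 2) * integral {T..t} (\<lambda>r. (norm (G r))\<^sup>2)
          + Dt t * integral {T..t} (\<lambda>r. norm (g r))"
        using Henstock_Kurzweil_Integration.integral_add[OF integrable_add[OF integrable_cmul[OF i1, of 2] integrable_cmul[OF i2, of "\<beta>\<^sup>2 / 2"]]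
            integrable_cmul[OF i3, of "Dt t"]]
          Henstock_Kurzweil_Integration.integral_add[OF integrable_cmul[OF i1, of 2] integrable_cmul[OF i2, of "\<beta>\<^sup>2 / 2"]]
        by (simp only: real_scaleR_def integral_cmult_real)
      also have "\<dots> \<le> 2 * (t * \<eta>) + (\<beta>\<^sup>2 / 2) * IG + Dt t * Kg"
      proof -
        have "integral {T..t} (\<lambda>r. (norm (G r))\<^sup>2) \<le> IG" unfolding IG_def
          using T by (intro integral_subset_le i2 wG_int) auto
        moreover have "integral {T..t} (\<lambda>r. norm (g r)) \<le> Kg" by (rule Kg) (use T in auto)
        moreover have "Dt t \<ge> 0"
          using dist_bd[of t t] t norm_ge_zero[of "p t"] by linarith
        ultimately show ?thesis using sq_int[OF t]
          by (intro add_mono mult_left_mono) auto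
      qed
      finally have A: "Y t + c0 * t - (Y T + c0 * T) \<le> 2 * (t * \<eta>) + (\<beta>\<^sup>2 / 2) * IG + Dt t * Kg" .
      have "- (U t \<bullet> p t) \<le> norm (U t) * norm (p t)" using norm_cauchy_schwarz[of "- U t" "p t"] by simp
      also have "\<dots> \<le> BU * Dt t"
        using BU[of t] dist_bd[of t t] t T BU0' by (intro mult_mono) auto
      finally have B: "- (U t \<bullet> p t) \<le> BU * Dt t" .
      have C: "0 \<le> (\<alpha> / 2) * ((p t \<bullet> p t) / t)" using \<alpha> t T by simp
      have "c0 * (t - T) = c0 * t - c0 * T" by (simp add: algebra_simps)
      then show ?thesis using A B C unfolding Y_def by linarith
    qed

    define C where "C = Y T + W * (norm (p T) + 1) + (\<beta>\<^sup>2 / 2) * IG"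
    have h3: "W * \<eta> / (4 * \<epsilon>) \<le> \<delta> / 8"
    proof -
      have "W * \<eta> / (4 * \<epsilon>) = W\<^sup>2 * \<eta> / \<delta>" using \<delta> W by (simp add: \<epsilon>_def power2_eq_square field_simps)
      also have "\<dots> \<le> W\<^sup>2 * (\<delta>\<^sup>2 / (8 * W\<^sup>2)) / \<delta>" using \<eta>(3) \<delta> by (intro divide_right_mono mult_left_mono) auto
      also have "\<dots> = \<delta> / 8" using \<delta> W by (simp add: power2_eq_square field_simps)
      finally show ?thesis .
    qed
    have key: "\<delta> * t \<le> C + 5 / 4 * (\<delta> * T)" if t: "t \<ge> T" for t
    proof -
      have Dt0: "Dt t \<ge> 0" using dist_bd[of t t] t norm_ge_zero[of "p t"] by linarith
      have h1: "BU * Dt t + Dt t * Kg \<le> W * Dt t"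
        using mult_right_mono[OF W(2) Dt0] by (simp add: algebra_simps)
      have h2: "W * Dt t = W * (norm (p T) + 1) + (W * \<epsilon>) * (t - T) + t * (W * \<eta> / (4 * \<epsilon>))"
        unfolding Dt_def by (simp add: algebra_simps)
      have h4: "t * (W * \<eta> / (4 * \<epsilon>)) \<le> t * (\<delta> / 8)" using h3 t T by (intro mult_left_mono) auto
      have h5: "2 * (t * \<eta>) \<le> t * (\<delta> / 8)"
      proof -
        have "t * \<eta> \<le> t * (\<delta> / 16)" using \<eta>(2) t T by (intro mult_left_mono) auto
        then show ?thesis by simp
      qed
      have e1: "c0 * (t - T) = 3 / 2 * (\<delta> * t) - 3 / 2 * (\<delta> * T)" unfolding c0 by (simp add: field_simps)
      have e2: "(W * \<epsilon>) * (t - T) = 1 / 4 * (\<delta> * t) - 1 / 4 * (\<delta> * T)" unfolding \<epsilon>(2) by (simp add: field_simps)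
      have e3: "t * (\<delta> / 8) = 1 / 8 * (\<delta> * t)" by simp
      show ?thesis using main[OF t] h1 h2 h4 h5 e1 e2 e3 unfolding C_def by linarith
    qed
    define t1 where "t1 = 2 * T + (\<bar>C\<bar> + 1) / \<delta>"
    have t1: "t1 \<ge> T" using T \<delta> by (simp add: t1_def add_nonneg_nonneg)
    have "\<delta> * t1 = 2 * (\<delta> * T) + \<bar>C\<bar> + 1" using \<delta> by (simp add: t1_def field_simps)
    moreover have "0 < \<delta> * T" using \<delta> T by simp
    ultimately show False using key[OF t1] by linarith
  qed

  have Em2: "m \<le> E t" for t using fm[of "x t"] inner_ge_zero[of "x' t"] unfolding E_def by linarith
  have LEm: "LE = m"
  proof (rule antisym)
    show "LE \<le> m"
    proof (rule ccontr)
      assume "\<not> LE \<le> m"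
      then have "(INF y. f y) < LE" by (simp add: m_def)
      then obtain y where "f y < LE" using cINF_less_iff[of UNIV f LE] f_bdd by auto
      then show False using Etend[of y] by simp
    qed
    show "m \<le> LE" by (rule tendsto_lowerbound[OF LE]) (use Em2 in auto)
  qed
  have fx_lim: "((\<lambda>t. f (x t)) \<longlongrightarrow> m) at_top"
  proof (rule tendsto_sandwich[of "\<lambda>_. m" _ _ E])
    show "\<forall>\<^sub>F t in at_top. m \<le> f (x t)" using fm by simp
    show "\<forall>\<^sub>F t in at_top. f (x t) \<le> E t"
      using inner_ge_zero by (simp add: E_def)
    show "((\<lambda>_. m) \<longlongrightarrow> m) at_top" by simp
    show "(E \<longlongrightarrow> m) at_top" using LE LEm by simp
  qed
  have "((\<lambda>t. 2 * (E t - f (x t))) \<longlongrightarrow> 2 * (m - m)) at_top"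
    by (intro tendsto_intros fx_lim) (use LE LEm in simp)
  moreover have "2 * (E t - f (x t)) = (norm (x' t))\<^sup>2" for t by (simp add: E_def power2_norm_eq_inner)
  ultimately have "((\<lambda>t. (norm (x' t))\<^sup>2) \<longlongrightarrow> 0) at_top" by simp
  then have "((\<lambda>t. sqrt ((norm (x' t))\<^sup>2)) \<longlongrightarrow> sqrt 0) at_top" by (rule tendsto_real_sqrt)
  then have x'lim: "((\<lambda>t. norm (x' t)) \<longlongrightarrow> 0) at_top" by simp
  have inv0: "((\<lambda>t::real. c / t) \<longlongrightarrow> 0) at_top" for c :: real
    by (rule tendsto_divide_0[OF tendsto_const filterlim_at_top_imp_at_infinity[OF filterlim_ident]])
  have "((\<lambda>t. 2 * (F t - (1 - \<alpha> * \<beta> / t) * (f (x t) - m) - \<alpha> * \<beta> * BE / t)) \<longlongrightarrow> 2 * (LF - (1 - 0) * (m - m) - 0)) at_top"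
    by (intro tendsto_intros LF fx_lim inv0)
  moreover have "2 * (F t - (1 - \<alpha> * \<beta> / t) * (f (x t) - m) - \<alpha> * \<beta> * BE / t) = (norm (U t))\<^sup>2" for t
    by (simp add: F_def power2_norm_eq_inner)
  ultimately have "((\<lambda>t. (norm (U t))\<^sup>2) \<longlongrightarrow> 2 * LF) at_top" by simp
  moreover have "2 * LF = 0"
  proof (rule inv_weight_limit_zero[OF t0 _ _ wU_int])
    show "continuous_on {t0..} (\<lambda>t. (norm (U t))\<^sup>2)" using Ucont by (auto intro!: continuous_intros simp: D_def)
  qed (use calculation in auto)
  ultimately have "((\<lambda>t. (norm (U t))\<^sup>2) \<longlongrightarrow> 0) at_top" by simp
  then have "((\<lambda>t. sqrt ((norm (U t))\<^sup>2)) \<longlongrightarrow> sqrt 0) at_top" by (rule tendsto_real_sqrt)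
  then have Ulim: "((\<lambda>t. norm (U t)) \<longlongrightarrow> 0) at_top" by simp
  have "((\<lambda>t. (1 / \<beta>) *\<^sub>R (U t - x' t)) \<longlongrightarrow> (1 / \<beta>) *\<^sub>R (0 - 0)) at_top"
    using Ulim x'lim unfolding tendsto_norm_zero_iff by (intro tendsto_intros)
  moreover have "(1 / \<beta>) *\<^sub>R (U t - x' t) = G t" for t using \<beta> by (simp add: U_def)
  ultimately have "(G \<longlongrightarrow> 0) at_top" by simp
  then have Glim: "((\<lambda>t. norm (G t)) \<longlongrightarrow> 0) at_top" unfolding tendsto_norm_zero_iff .
  have ev: "\<forall>\<^sub>F t in at_top. norm (vector_derivative u (at t within {t0..})) = norm (U t)"
    unfolding eventually_at_top_linorder using vdu by (auto simp: D_def intro!: exI[of _ t0])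
  show ?thesis
  proof (intro conjI)
    show "bdd_above ((\<lambda>t. norm (vector_derivative u (at t within {t0..}))) ` {t0..})"
      using BU vdu by (auto simp: D_def intro!: bdd_aboveI[of _ BU])
    show "(\<lambda>t. 1 / t * (norm (x' t))\<^sup>2) integrable_on {t0..}" by (rule wx_int)
    show "(\<lambda>t. (norm (gf (x t)))\<^sup>2) integrable_on {t0..}" using wG_int by (simp add: G_def)
    show "(\<lambda>t. 1 / t * (norm (vector_derivative u (at t within {t0..})))\<^sup>2) integrable_on {t0..}"
      by (rule integrable_eq[OF wU_int]) (simp add: vdu[unfolded D_def])
    show "((\<lambda>t. norm (vector_derivative u (at t within {t0..}))) \<longlongrightarrow> 0) at_top"
      using tendsto_cong[OF ev] Ulim by simp
    show "((\<lambda>t. norm (x' t)) \<longlongrightarrow> 0) at_top" by (rule x'lim)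
    show "((\<lambda>t. norm (gf (x t))) \<longlongrightarrow> 0) at_top" using Glim by (simp add: G_def)
    show "((\<lambda>t. f (x t)) \<longlongrightarrow> (INF y. f y)) at_top" using fx_lim by (simp add: m_def)
  qed
qed


end
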